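(* Let $\mathbf{F}=(F_1,\ldots,F_d)$ be a vector of $d$ pairwise distinct (non-isomorphic) finite simple graphs with no isolated vertices, and let $n_0\ge\max\{|F_1|,\ldots,|F_d|\}$. Then there is a constant $V_\mathbf{F}>0$ such that the $d$-dimensional volume of $P_{\mathbf{F};n}$ is larger than $V_\mathbf{F}$ for every $n\ge n_0$.
   Context: $|H|$ is the number of vertices of a graph $H$. For graphs $F,G$, $t^L(F,G)$ is the number of subgraphs of $G$ (not necessarily induced) isomorphic to $F$, and $t(F,G)=t^L(F,G)/t^L(F,K_{|G|})$ if $|F|\le|G|$ and $t(F,G)=0$ otherwise, where $K_N$ is the complete graph on $N$ vertices. Write $t(\mathbf{F},G)=(t(F_1,G),\ldots,t(F_d,G))$. The polytope from subgraph statistics is $P_{\mathbf{F};n}=\mathrm{conv}\{t(\mathbf{F},G)\mid G\text{ a graph on } n \text{ vertices}\}\subseteq\mathbb{R}^d$. *)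

theory Defs
  imports "HOL-Analysis.Analysis"
begin

text \<open>A finite simple graph on the vertex set {0..<k} is a pair (k, E) where E is a set
  of 2-element subsets of {0..<k}. |H| = fst H.\<close>

type_synonym graph = "nat \<times> nat set set"

definition simple_graph :: "graph \<Rightarrow> bool" where
  "simple_graph H \<longleftrightarrow> (\<forall>e\<in>snd H. \<exists>u v. u \<noteq> v \<and> u < fst H \<and> v < fst H \<and> e = {u, v})"

definition no_isolated :: "graph \<Rightarrow> bool" where
  "no_isolated H \<longleftrightarrow> (\<forall>v < fst H. \<exists>e\<in>snd H. v \<in> e)"

definition graph_iso :: "graph \<Rightarrow> graph \<Rightarrow> bool" where
  "graph_iso F H \<longleftrightarrow> (\<exists>f. bij_betw f {0..<fst F} {0..<fst H} \<and> (\<lambda>e. f ` e) ` snd F = snd H)"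

definition complete_graph :: "nat \<Rightarrow> graph" where
  "complete_graph N = (N, {{u, v} | u v. u < N \<and> v < N \<and> u \<noteq> v})"

definition tL :: "graph \<Rightarrow> graph \<Rightarrow> nat" where
  "tL F G = card {(V', E'). V' \<subseteq> {0..<fst G} \<and> E' \<subseteq> snd G \<and>
      (\<exists>f. bij_betw f {0..<fst F} V' \<and> (\<lambda>e. f ` e) ` snd F = E')}"

definition tdens :: "graph \<Rightarrow> graph \<Rightarrow> real" where
  "tdens F G = (if fst F \<le> fst G then real (tL F G) / real (tL F (complete_graph (fst G))) else 0)"

definition tvec :: "('d \<Rightarrow> graph) \<Rightarrow> graph \<Rightarrow> real ^ 'd" where
  "tvec F G = (\<chi> i. tdens (F i) G)"

definition subgraph_polytope :: "('d \<Rightarrow> graph) \<Rightarrow> nat \<Rightarrow> (real ^ 'd) set" where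
  "subgraph_polytope F n = convex hull {tvec F G | G. simple_graph G \<and> fst G = n}"

end

theory Submission
  imports Defs
begin

lemma geo_interior:
  fixes S :: "(real^'d) set"
  assumes "0 \<in> S" "span S = UNIV"
  shows "interior (convex hull S) \<noteq> {}"
proof -
  have h0: "0 \<in> affine hull S" by (rule hull_inc[OF assms(1)])
  have ah: "affine hull S = UNIV" using affine_hull_span_0[OF h0] assms(2) by simp
  have "affine hull (convex hull S) = UNIV" using ah by (simp only: affine_hull_convex_hull)
  hence "rel_interior (convex hull S) = interior (convex hull S)" by (rule rel_interior_interior)
  moreover have "convex hull S \<noteq> {}" using hull_inc[OF assms(1), of convex] by blast
  hence "rel_interior (convex hull S) \<noteq> {}"
    using rel_interior_eq_empty[OF convex_convex_hull[of S]] by blast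
  ultimately show ?thesis by simp
qed


lemma geo_measure_pos:
  fixes P :: "(real^'d) set"
  assumes "interior C \<noteq> {}" "C \<subseteq> P" "compact P"
  shows "measure lborel P > 0"
proof -
  obtain x where x: "x \<in> interior C" using assms(1) by blast
  have "open (interior C)" by simp
  then obtain e where e0: "e > 0" "ball x e \<subseteq> interior C"
    using x open_contains_ball by blast
  hence e: "e > 0" "ball x e \<subseteq> C" using interior_subset by blast+
  have "measure lborel (ball x e) \<le> measure lborel P"
  proof (rule measure_mono_fmeasurable)
    show "ball x e \<subseteq> P" using e assms(2) by blast
    show "ball x e \<in> sets lborel" by simp
    show "P \<in> fmeasurable lborel" using assms(3) by (rule fmeasurable_compact)
  qed
  moreover have "measure lborel (ball x e) > 0" using content_ball_pos[OF e(1)] by simp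
  ultimately show ?thesis by linarith
qed
lemma geo_perturb:
  fixes c c' :: "'i \<Rightarrow> real^'d"
  assumes fin: "finite I" and r: "r > 0" and B: "ball z (2*r) \<subseteq> convex hull (c ` I)"
    and close: "\<And>i. i \<in> I \<Longrightarrow> dist (c' i) (c i) < r"
  shows "ball z r \<subseteq> convex hull (c' ` I)"
proof
  fix y assume y: "y \<in> ball z r"
  show "y \<in> convex hull (c' ` I)"
  proof (rule ccontr)
    assume ny: "y \<notin> convex hull (c' ` I)"
    have "compact (convex hull (c' ` I))"
      using fin by (intro compact_convex_hull finite_imp_compact) simp
    hence cl: "closed (convex hull (c' ` I))" by (rule compact_imp_closed)
    obtain a b where ab: "inner a y < b" "\<forall>x\<in>convex hull (c' ` I). b < inner a x"
      using separating_hyperplane_closed_point[OF convex_convex_hull cl ny] by blast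
    have "z \<in> ball z (2*r)" using r by simp
    hence "z \<in> convex hull (c ` I)" using B by blast
    hence "I \<noteq> {}" by auto
    then obtain i0 where "i0 \<in> I" by blast
    have a0: "a \<noteq> 0"
    proof
      assume "a = 0"
      have "c' i0 \<in> convex hull (c' ` I)" using \<open>i0 \<in> I\<close> hull_subset[of "c' ` I" convex] by blast
      hence "b < inner a (c' i0)" using ab(2) by blast
      thus False using ab(1) \<open>a = 0\<close> by simp
    qed
    hence na: "norm a > 0" by simp
    define w where "w = y - (r / norm a) *\<^sub>R a"
    have "dist z w \<le> dist z y + dist y w" by (rule dist_triangle)
    moreover have "dist y w = r" using na r by (simp add: w_def dist_norm)
    moreover have "dist z y < r" using y by simp
    ultimately have "dist z w < 2 * r" by linarith
    hence w: "w \<in> convex hull (c ` I)" using B by auto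
    have "c ` I \<subseteq> {x. inner a x > b - r * norm a}"
    proof
      fix x assume "x \<in> c ` I"
      then obtain i where i: "i \<in> I" "x = c i" by blast
      have "c' i \<in> convex hull (c' ` I)" using i(1) hull_subset[of "c' ` I" convex] by blast
      hence 1: "b < inner a (c' i)" using ab(2) by blast
      have 2: "\<bar>inner a (c i - c' i)\<bar> \<le> norm a * norm (c i - c' i)"
        by (rule Cauchy_Schwarz_ineq2)
      have "norm (c i - c' i) < r" using close[OF i(1)] by (simp add: dist_norm norm_minus_commute)
      hence 3: "norm a * norm (c i - c' i) \<le> norm a * r" using na by simp
      have 4: "inner a (c i) = inner a (c' i) + inner a (c i - c' i)" by (simp add: inner_diff_right)
      have "inner a (c i) > b - r * norm a"
        using 1 abs_le_D2[OF 2] 3 4 mult.commute[of r "norm a"] by linarith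
      thus "x \<in> {x. inner a x > b - r * norm a}" using i(2) by simp
    qed
    moreover have "convex {x. inner a x > b - r * norm a}" by (rule convex_halfspace_gt)
    ultimately have "convex hull (c ` I) \<subseteq> {x. inner a x > b - r * norm a}"
      by (rule hull_minimal)
    hence "inner a w > b - r * norm a" using w by blast
    moreover have "inner a w = inner a y - r * norm a"
      using na by (simp add: w_def inner_diff_right power2_norm_eq_inner[symmetric] power2_eq_square)
    ultimately show False using ab(1) by simp
  qed
qed

definition hset :: "bool \<Rightarrow> graph \<Rightarrow> nat set set \<Rightarrow> nat set \<Rightarrow> (nat \<Rightarrow> nat) set" where
  "hset b F E T = {f \<in> {0..<fst F} \<rightarrow>\<^sub>E T. (b \<longrightarrow> inj_on f {0..<fst F}) \<and> (\<forall>e\<in>snd F. f ` e \<in> E)}"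

definition hsetY :: "bool \<Rightarrow> graph \<Rightarrow> nat set set \<Rightarrow> nat set \<Rightarrow> (nat \<Rightarrow> nat) set" where
  "hsetY b F E U = {f \<in> hset b F E U. f ` {0..<fst F} = U}"

lemma finite_hset: "finite T \<Longrightarrow> finite (hset b F E T)"
proof -
  assume "finite T"
  hence "finite ({0..<fst F} \<rightarrow>\<^sub>E T)" by (intro finite_PiE) auto
  thus ?thesis unfolding hset_def by (rule finite_subset[rotated]) blast
qed

lemma finite_hsetY: "finite U \<Longrightarrow> finite (hsetY b F E U)"
  unfolding hsetY_def using finite_hset by (rule finite_subset[rotated]) auto

lemma hset_decomp:
  assumes "finite T"
  shows "card (hset b F E T) = (\<Sum>U\<in>Pow T. card (hsetY b F E U))"
proof -
  have eq: "hset b F E T = (\<Union>U\<in>Pow T. hsetY b F E U)"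
  proof
    show "hset b F E T \<subseteq> (\<Union>U\<in>Pow T. hsetY b F E U)"
    proof
      fix f assume f: "f \<in> hset b F E T"
      let ?U = "f ` {0..<fst F}"
      have "?U \<in> Pow T" using f unfolding hset_def by auto
      moreover have "f \<in> hsetY b F E ?U" using f unfolding hset_def hsetY_def by auto
      ultimately show "f \<in> (\<Union>U\<in>Pow T. hsetY b F E U)" by blast
    qed
  next
    show "(\<Union>U\<in>Pow T. hsetY b F E U) \<subseteq> hset b F E T"
    proof
      fix f assume "f \<in> (\<Union>U\<in>Pow T. hsetY b F E U)"
      then obtain U where U: "U \<subseteq> T" "f \<in> hsetY b F E U" by blast
      thus "f \<in> hset b F E T" unfolding hset_def hsetY_def by (auto simp: PiE_iff)
    qed
  qed
  have "card (\<Union>U\<in>Pow T. hsetY b F E U) = (\<Sum>U\<in>Pow T. card (hsetY b F E U))"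
  proof (rule card_UN_disjoint)
    show "finite (Pow T)" using assms by simp
    show "\<forall>U\<in>Pow T. finite (hsetY b F E U)" using assms finite_hsetY
      by (meson PowD finite_subset)
    show "\<forall>U\<in>Pow T. \<forall>U'\<in>Pow T. U \<noteq> U' \<longrightarrow> hsetY b F E U \<inter> hsetY b F E U' = {}"
      unfolding hsetY_def by blast
  qed
  thus ?thesis using eq by simp
qed

lemma mobius_zero:
  fixes g :: "nat set \<Rightarrow> real"
  assumes "finite A" and h: "\<And>T. T \<subseteq> A \<Longrightarrow> (\<Sum>U\<in>Pow T. g U) = 0"
  shows "U \<subseteq> A \<Longrightarrow> g U = 0"
proof (induction "card U" arbitrary: U rule: less_induct)
  case less
  have finU: "finite U" using less.prems assms(1) finite_subset by blast
  have "(\<Sum>U'\<in>Pow U. g U') = g U + (\<Sum>U'\<in>Pow U - {U}. g U')"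
    by (rule sum.remove) (use finU in auto)
  moreover have "(\<Sum>U'\<in>Pow U - {U}. g U') = 0"
  proof (rule sum.neutral, rule ballI)
    fix U' assume U': "U' \<in> Pow U - {U}"
    hence "U' \<subset> U" by blast
    hence "card U' < card U" using finU by (rule psubset_card_mono[rotated])
    moreover have "U' \<subseteq> A" using U' less.prems by blast
    ultimately show "g U' = 0" using less.hyps by blast
  qed
  ultimately show ?case using h[OF less.prems] by simp
qed

lemma simple_edges_sub: "simple_graph H \<Longrightarrow> e \<in> snd H \<Longrightarrow> e \<subseteq> {0..<fst H}"
  unfolding simple_graph_def by fastforce

lemma simple_finite_edges: "simple_graph H \<Longrightarrow> finite (snd H)"
proof -
  assume "simple_graph H"
  hence "snd H \<subseteq> Pow {0..<fst H}" using simple_edges_sub by blast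
  thus ?thesis by (rule finite_subset) simp
qed

lemma Y_iso:
  assumes sF: "simple_graph F" and sH: "simple_graph H"
    and f: "f \<in> hsetY b F (snd H) {0..<fst H}" and le: "fst F \<le> fst H"
    and ce: "card (snd H) \<le> card (snd F)"
  shows "graph_iso F H"
proof -
  have fim: "f ` {0..<fst F} = {0..<fst H}" using f unfolding hsetY_def by blast
  have fE: "\<forall>e\<in>snd F. f ` e \<in> snd H" using f unfolding hsetY_def hset_def by blast
  have "fst H = card (f ` {0..<fst F})" using fim by simp
  also have "\<dots> \<le> fst F" using card_image_le[of "{0..<fst F}" f] by simp
  finally have eqk: "fst F = fst H" using le by simp
  have "card (f ` {0..<fst F}) = card {0..<fst F}" using fim eqk by simp
  hence inj: "inj_on f {0..<fst F}" by (rule eq_card_imp_inj_on[rotated]) simp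
  have bij: "bij_betw f {0..<fst F} {0..<fst H}" using inj fim by (simp add: bij_betw_def)
  have sub: "(\<lambda>e. f ` e) ` snd F \<subseteq> snd H" using fE by blast
  have inj2: "inj_on (\<lambda>e. f ` e) (snd F)"
  proof (rule inj_onI)
    fix x y assume "x \<in> snd F" "y \<in> snd F" "f ` x = f ` y"
    thus "x = y" using inj_on_image_eq_iff[OF inj] simple_edges_sub[OF sF] by blast
  qed
  have finH: "finite (snd H)" by (rule simple_finite_edges[OF sH])
  have "card ((\<lambda>e. f ` e) ` snd F) = card (snd F)" by (rule card_image[OF inj2])
  moreover have "card ((\<lambda>e. f ` e) ` snd F) \<le> card (snd H)" by (rule card_mono[OF finH sub])
  ultimately have "card ((\<lambda>e. f ` e) ` snd F) = card (snd H)" using ce by linarith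
  hence "(\<lambda>e. f ` e) ` snd F = snd H" by (rule card_subset_eq[OF finH sub])
  thus ?thesis unfolding graph_iso_def using bij by blast
qed

lemma Y_card_small:
  assumes f: "f \<in> hsetY b F E {0..<K}"
  shows "K \<le> fst F"
proof -
  have "f ` {0..<fst F} = {0..<K}" using f unfolding hsetY_def by blast
  hence "K = card (f ` {0..<fst F})" by simp
  also have "\<dots> \<le> fst F" using card_image_le[of "{0..<fst F}" f] by simp
  finally show ?thesis .
qed

lemma Y_self_pos:
  assumes sF: "simple_graph F"
  shows "card (hsetY b F (snd F) {0..<fst F}) > 0"
proof -
  let ?f = "restrict id {0..<fst F}"
  have "?f \<in> hsetY b F (snd F) {0..<fst F}"
  proof -
    have "\<forall>e\<in>snd F. ?f ` e = e"
    proof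
      fix e assume "e \<in> snd F"
      hence "e \<subseteq> {0..<fst F}" by (rule simple_edges_sub[OF sF])
      thus "?f ` e = e" by auto
    qed
    moreover have "?f ` {0..<fst F} = {0..<fst F}" by auto
    moreover have "inj_on ?f {0..<fst F}" by (auto simp: inj_on_def)
    moreover have "?f \<in> {0..<fst F} \<rightarrow>\<^sub>E {0..<fst F}" by auto
    ultimately show ?thesis unfolding hsetY_def hset_def by auto
  qed
  moreover have "finite (hsetY b F (snd F) {0..<fst F})" by (rule finite_hsetY) simp
  ultimately show ?thesis using card_gt_0_iff by blast
qed

lemma indep:
  fixes F :: "'d::finite \<Rightarrow> graph" and \<gamma> :: "'d \<Rightarrow> real"
  assumes graphs: "\<And>i. simple_graph (F i)"
    and distinct: "\<And>i j. i \<noteq> j \<Longrightarrow> \<not> graph_iso (F i) (F j)"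
    and h: "\<And>j T. T \<subseteq> {0..<fst (F j)} \<Longrightarrow>
              (\<Sum>i\<in>UNIV. \<gamma> i * real (card (hset b (F i) (snd (F j)) T))) = 0"
  shows "\<gamma> = (\<lambda>_. 0)"
proof (rule ccontr)
  assume "\<gamma> \<noteq> (\<lambda>_. 0)"
  then obtain i1 where i1: "\<gamma> i1 \<noteq> 0" by blast
  define I where "I = {i. \<gamma> i \<noteq> 0}"
  have I1: "i1 \<in> I" using i1 I_def by blast
  have finI: "finite I" by simp
  define K where "K = Max ((\<lambda>i. fst (F i)) ` I)"
  have Kge: "\<And>i. i \<in> I \<Longrightarrow> fst (F i) \<le> K" unfolding K_def using finI by simp
  have "K \<in> (\<lambda>i. fst (F i)) ` I" unfolding K_def using finI I1 by (intro Max_in) auto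
  then obtain i2 where i2: "i2 \<in> I" "fst (F i2) = K" by blast
  define J where "J = {i \<in> I. fst (F i) = K}"
  have J2: "i2 \<in> J" using i2 J_def by blast
  define m where "m = Min ((\<lambda>i. card (snd (F i))) ` J)"
  have mle: "\<And>i. i \<in> J \<Longrightarrow> m \<le> card (snd (F i))" unfolding m_def J_def by simp
  have "m \<in> (\<lambda>i. card (snd (F i))) ` J" unfolding m_def using J2 by (intro Min_in) (auto simp: J_def)
  then obtain i0 where i0: "i0 \<in> J" "card (snd (F i0)) = m" by blast
  have i0I: "i0 \<in> I" and k0: "fst (F i0) = K" using i0(1) J_def by auto
  define g where "g U = (\<Sum>i\<in>UNIV. \<gamma> i * real (card (hsetY b (F i) (snd (F i0)) U)))" for U
  have gsum: "(\<Sum>U\<in>Pow T. g U) = 0" if T: "T \<subseteq> {0..<K}" for T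
  proof -
    have finT: "finite T" using T finite_subset by blast
    have "(\<Sum>U\<in>Pow T. g U) = (\<Sum>i\<in>UNIV. \<Sum>U\<in>Pow T. \<gamma> i * real (card (hsetY b (F i) (snd (F i0)) U)))"
      unfolding g_def by (rule sum.swap)
    also have "\<dots> = (\<Sum>i\<in>UNIV. \<gamma> i * real (card (hset b (F i) (snd (F i0)) T)))"
    proof (rule sum.cong[OF refl])
      fix i
      have "(\<Sum>U\<in>Pow T. \<gamma> i * real (card (hsetY b (F i) (snd (F i0)) U)))
            = \<gamma> i * (\<Sum>U\<in>Pow T. real (card (hsetY b (F i) (snd (F i0)) U)))"
        by (simp add: sum_distrib_left)
      also have "\<dots> = \<gamma> i * real (card (hset b (F i) (snd (F i0)) T))"
        using hset_decomp[OF finT, of b "F i" "snd (F i0)"] by simp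
      finally show "(\<Sum>U\<in>Pow T. \<gamma> i * real (card (hsetY b (F i) (snd (F i0)) U)))
            = \<gamma> i * real (card (hset b (F i) (snd (F i0)) T))" .
    qed
    also have "\<dots> = 0" using h[of T i0] T k0 by simp
    finally show ?thesis .
  qed
  have g0: "g {0..<K} = 0"
    by (rule mobius_zero[of "{0..<K}" g]) (use gsum in auto)
  have others: "\<gamma> i * real (card (hsetY b (F i) (snd (F i0)) {0..<K})) = 0" if "i \<noteq> i0" for i
  proof (cases "i \<in> I")
    case False thus ?thesis unfolding I_def by simp
  next
    case True
    have "hsetY b (F i) (snd (F i0)) {0..<K} = {}"
    proof (rule ccontr)
      assume "hsetY b (F i) (snd (F i0)) {0..<K} \<noteq> {}"
      then obtain f where f: "f \<in> hsetY b (F i) (snd (F i0)) {0..<K}" by blast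
      have "K \<le> fst (F i)" by (rule Y_card_small[OF f])
      hence kiK: "fst (F i) = K" using Kge[OF True] by simp
      hence "i \<in> J" using True J_def by simp
      hence ce: "card (snd (F i0)) \<le> card (snd (F i))" using mle i0(2) by simp
      have "graph_iso (F i) (F i0)"
        by (rule Y_iso[OF graphs graphs _ _ ce]) (use f k0 kiK in auto)
      thus False using distinct[OF that] by simp
    qed
    thus ?thesis by simp
  qed
  have "g {0..<K} = \<gamma> i0 * real (card (hsetY b (F i0) (snd (F i0)) {0..<K}))
        + (\<Sum>i\<in>UNIV - {i0}. \<gamma> i * real (card (hsetY b (F i) (snd (F i0)) {0..<K})))"
    unfolding g_def by (rule sum.remove) auto
  also have "(\<Sum>i\<in>UNIV - {i0}. \<gamma> i * real (card (hsetY b (F i) (snd (F i0)) {0..<K}))) = 0"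
    using others by (intro sum.neutral) auto
  finally have "g {0..<K} = \<gamma> i0 * real (card (hsetY b (F i0) (snd (F i0)) {0..<K}))" by simp
  moreover have "\<gamma> i0 \<noteq> 0" using i0I I_def by simp
  moreover have "card (hsetY b (F i0) (snd (F i0)) {0..<K}) > 0"
    using Y_self_pos[OF graphs[of i0], of b] k0 by simp
  ultimately have "g {0..<K} \<noteq> 0" by simp
  thus False using g0 by simp
qed

definition copies :: "graph \<Rightarrow> graph \<Rightarrow> (nat set \<times> nat set set) set" where
  "copies F G = {(V', E'). V' \<subseteq> {0..<fst G} \<and> E' \<subseteq> snd G \<and>
      (\<exists>f. bij_betw f {0..<fst F} V' \<and> (\<lambda>e. f ` e) ` snd F = E')}"

lemma tL_copies: "tL F G = card (copies F G)"
  unfolding tL_def copies_def by simp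

definition autset :: "graph \<Rightarrow> (nat \<Rightarrow> nat) set" where
  "autset F = {g \<in> {0..<fst F} \<rightarrow>\<^sub>E {0..<fst F}. bij_betw g {0..<fst F} {0..<fst F} \<and>
      (\<lambda>e. g ` e) ` snd F = snd F}"

definition Phi :: "graph \<Rightarrow> (nat \<Rightarrow> nat) \<Rightarrow> nat set \<times> nat set set" where
  "Phi F f = (f ` {0..<fst F}, (\<lambda>e. f ` e) ` snd F)"

lemma Phi_image:
  assumes sF: "simple_graph F"
  shows "Phi F ` hset True F (snd G) {0..<fst G} = copies F G"
proof
  show "Phi F ` hset True F (snd G) {0..<fst G} \<subseteq> copies F G"
  proof
    fix c assume "c \<in> Phi F ` hset True F (snd G) {0..<fst G}"
    then obtain f where f: "f \<in> hset True F (snd G) {0..<fst G}" and c: "c = Phi F f" by blast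
    have 1: "f ` {0..<fst F} \<subseteq> {0..<fst G}" using f unfolding hset_def by auto
    have 2: "(\<lambda>e. f ` e) ` snd F \<subseteq> snd G" using f unfolding hset_def by auto
    have "inj_on f {0..<fst F}" using f unfolding hset_def by auto
    hence 3: "bij_betw f {0..<fst F} (f ` {0..<fst F})" by (simp add: bij_betw_def)
    show "c \<in> copies F G" unfolding c Phi_def copies_def using 1 2 3 by blast
  qed
next
  show "copies F G \<subseteq> Phi F ` hset True F (snd G) {0..<fst G}"
  proof
    fix c assume "c \<in> copies F G"
    then obtain V' E' f' where c: "c = (V', E')" and V': "V' \<subseteq> {0..<fst G}" and E': "E' \<subseteq> snd G"
      and bij: "bij_betw f' {0..<fst F} V'" and Ee: "(\<lambda>e. f' ` e) ` snd F = E'"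
      unfolding copies_def by blast
    define f where "f = restrict f' {0..<fst F}"
    have eqe: "f ` e = f' ` e" if "e \<in> snd F" for e
      using simple_edges_sub[OF sF that] unfolding f_def by auto
    have im: "f ` {0..<fst F} = V'" using bij unfolding f_def bij_betw_def by auto
    have inj: "inj_on f {0..<fst F}" using bij unfolding f_def bij_betw_def inj_on_def by auto
    have Ef: "(\<lambda>e. f ` e) ` snd F = E'" using Ee eqe by (auto simp: image_iff)
    have "f \<in> hset True F (snd G) {0..<fst G}"
      unfolding hset_def using im V' inj Ef E' by (auto simp: f_def)
    moreover have "Phi F f = c" unfolding Phi_def c using im Ef by simp
    ultimately show "c \<in> Phi F ` hset True F (snd G) {0..<fst G}" by blast
  qed
qed

lemma fiber_card:
  assumes sF: "simple_graph F" and f0: "f0 \<in> hset True F (snd G) {0..<fst G}"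
  shows "card {f \<in> hset True F (snd G) {0..<fst G}. Phi F f = Phi F f0} = card (autset F)"
proof -
  let ?A = "hset True F (snd G) {0..<fst G}"
  let ?K = "{0..<fst F}"
  define th where "th g = restrict (f0 \<circ> g) ?K" for g :: "nat \<Rightarrow> nat"
  have f0i: "inj_on f0 ?K" and f0m: "\<And>u. u \<in> ?K \<Longrightarrow> f0 u \<in> {0..<fst G}"
    and f0e: "\<And>e. e \<in> snd F \<Longrightarrow> f0 ` e \<in> snd G"
    using f0 unfolding hset_def by auto
  have eK: "\<And>e. e \<in> snd F \<Longrightarrow> e \<subseteq> ?K" by (rule simple_edges_sub[OF sF])
  have finE: "finite (snd F)" by (rule simple_finite_edges[OF sF])
  have th_e: "th g ` e = f0 ` (g ` e)" if "e \<subseteq> ?K" for g e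
    using that unfolding th_def by auto
  have th_in: "th g \<in> ?A \<and> Phi F (th g) = Phi F f0" if g: "g \<in> autset F" for g
  proof -
    have gm: "\<And>u. u \<in> ?K \<Longrightarrow> g u \<in> ?K" and gb: "bij_betw g ?K ?K"
      and ge: "(\<lambda>e. g ` e) ` snd F = snd F" using g unfolding autset_def by auto
    have gi: "inj_on g ?K" and gim: "g ` ?K = ?K" using gb unfolding bij_betw_def by auto
    have 1: "th g \<in> ?K \<rightarrow>\<^sub>E {0..<fst G}" unfolding th_def using gm f0m by auto
    have 2: "inj_on (th g) ?K"
    proof -
      have "inj_on (f0 \<circ> g) ?K" using comp_inj_on[OF gi] f0i gim by simp
      thus ?thesis unfolding th_def inj_on_def by auto
    qed
    have ge2: "\<And>e. e \<in> snd F \<Longrightarrow> g ` e \<in> snd F" using ge by blast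
    have 3: "\<forall>e\<in>snd F. th g ` e \<in> snd G" using th_e eK ge2 f0e by auto
    have 4: "th g ` ?K = f0 ` ?K" using th_e[of ?K g] gim by simp
    have 5: "(\<lambda>e. th g ` e) ` snd F = (\<lambda>e. f0 ` e) ` snd F"
    proof -
      have "(\<lambda>e. th g ` e) ` snd F = (\<lambda>e. f0 ` (g ` e)) ` snd F"
      proof (rule image_cong[OF refl])
        fix e assume "e \<in> snd F" thus "th g ` e = f0 ` (g ` e)" by (rule th_e[OF eK])
      qed
      also have "\<dots> = (\<lambda>e. f0 ` e) ` ((\<lambda>e. g ` e) ` snd F)" by (simp add: image_image)
      also have "\<dots> = (\<lambda>e. f0 ` e) ` snd F" using ge by simp
      finally show ?thesis .
    qed
    show ?thesis using 1 2 3 4 5 unfolding hset_def Phi_def by auto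
  qed
  have th_inj: "inj_on th (autset F)"
  proof (rule inj_onI)
    fix g g' assume g: "g \<in> autset F" and g': "g' \<in> autset F" and eq: "th g = th g'"
    show "g = g'"
    proof (rule extensionalityI)
      show "g \<in> extensional ?K" "g' \<in> extensional ?K" using g g' unfolding autset_def by (auto simp: PiE_iff)
      fix u assume u: "u \<in> ?K"
      have "th g u = th g' u" using eq by simp
      hence "f0 (g u) = f0 (g' u)" using u unfolding th_def by simp
      moreover have "g u \<in> ?K" "g' u \<in> ?K" using g g' u unfolding autset_def by auto
      ultimately show "g u = g' u" using f0i unfolding inj_on_def by blast
    qed
  qed
  have th_surj: "{f \<in> ?A. Phi F f = Phi F f0} \<subseteq> th ` autset F"
  proof
    fix f assume "f \<in> {f \<in> ?A. Phi F f = Phi F f0}"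
    hence f: "f \<in> ?A" and ph: "Phi F f = Phi F f0" by auto
    have fim: "f ` ?K = f0 ` ?K" and fE: "(\<lambda>e. f ` e) ` snd F = (\<lambda>e. f0 ` e) ` snd F"
      using ph unfolding Phi_def by auto
    have fi: "inj_on f ?K" and fext: "f \<in> extensional ?K" using f unfolding hset_def by (auto simp: PiE_iff)
    define g where "g = restrict (\<lambda>u. inv_into ?K f0 (f u)) ?K"
    have gK: "g u \<in> ?K" and fg: "f0 (g u) = f u" if u: "u \<in> ?K" for u
    proof -
      have fu: "f u \<in> f0 ` ?K" using u fim by blast
      have "g u = inv_into ?K f0 (f u)" unfolding g_def using u by simp
      thus "g u \<in> ?K" "f0 (g u) = f u" using inv_into_into[OF fu] f_inv_into_f[OF fu] by simp_all
    qed
    have gi: "inj_on g ?K"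
    proof (rule inj_onI)
      fix u u' assume "u \<in> ?K" "u' \<in> ?K" "g u = g u'"
      hence "f u = f u'" using fg by metis
      thus "u = u'" using fi \<open>u \<in> ?K\<close> \<open>u' \<in> ?K\<close> unfolding inj_on_def by blast
    qed
    have gim: "g ` ?K = ?K" by (rule endo_inj_surj) (use gK gi in auto)
    have gE: "g ` e \<in> snd F" if e: "e \<in> snd F" for e
    proof -
      have "f ` e \<in> (\<lambda>e. f0 ` e) ` snd F" using fE e by blast
      then obtain e' where e': "e' \<in> snd F" "f ` e = f0 ` e'" by blast
      have "g ` e = inv_into ?K f0 ` (f ` e)" using eK[OF e] unfolding g_def by auto
      also have "\<dots> = inv_into ?K f0 ` (f0 ` e')" using e' by simp
      also have "\<dots> = e'" using inv_into_image_cancel[OF f0i eK[OF e'(1)]] .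
      finally show ?thesis using e' by simp
    qed
    have gEsub: "(\<lambda>e. g ` e) ` snd F \<subseteq> snd F" using gE by blast
    have "inj_on (\<lambda>e. g ` e) (snd F)"
    proof (rule inj_onI)
      fix x y assume "x \<in> snd F" "y \<in> snd F" "g ` x = g ` y"
      thus "x = y" using inj_on_image_eq_iff[OF gi] eK by blast
    qed
    hence "card ((\<lambda>e. g ` e) ` snd F) = card (snd F)" by (rule card_image)
    hence gEq: "(\<lambda>e. g ` e) ` snd F = snd F" by (rule card_subset_eq[OF finE gEsub])
    have gaut: "g \<in> autset F"
      unfolding autset_def bij_betw_def using gK gi gim gEq by (auto simp: g_def)
    have "th g = f"
    proof (rule extensionalityI)
      show "th g \<in> extensional ?K" unfolding th_def by simp
      show "f \<in> extensional ?K" by (rule fext)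
      fix u assume "u \<in> ?K" thus "th g u = f u" unfolding th_def using fg by simp
    qed
    thus "f \<in> th ` autset F" using gaut by blast
  qed
  have "{f \<in> ?A. Phi F f = Phi F f0} = th ` autset F" using th_surj th_in by blast
  thus ?thesis using card_image[OF th_inj] by simp
qed

lemma autset_pos: assumes sF: "simple_graph F" shows "card (autset F) > 0"
proof -
  let ?K = "{0..<fst F}"
  let ?f = "restrict id ?K"
  have "\<forall>e\<in>snd F. ?f ` e = e"
  proof
    fix e assume "e \<in> snd F"
    hence "e \<subseteq> ?K" by (rule simple_edges_sub[OF sF])
    thus "?f ` e = e" by auto
  qed
  hence "(\<lambda>e. ?f ` e) ` snd F = snd F" by simp
  moreover have "bij_betw ?f ?K ?K" unfolding bij_betw_def inj_on_def by auto
  moreover have "?f \<in> ?K \<rightarrow>\<^sub>E ?K" by auto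
  ultimately have "?f \<in> autset F" unfolding autset_def by blast
  moreover have "finite (autset F)"
  proof -
    have "finite (?K \<rightarrow>\<^sub>E ?K)" by (intro finite_PiE) auto
    thus ?thesis unfolding autset_def by (rule finite_subset[rotated]) blast
  qed
  ultimately show ?thesis using card_gt_0_iff by blast
qed

lemma hset_count:
  assumes sF: "simple_graph F"
  shows "card (hset True F (snd G) {0..<fst G}) = tL F G * card (autset F)"
proof -
  let ?A = "hset True F (snd G) {0..<fst G}"
  have finA: "finite ?A" by (rule finite_hset) simp
  have eq: "?A = (\<Union>c\<in>Phi F ` ?A. {f \<in> ?A. Phi F f = c})" by blast
  have "card (\<Union>c\<in>Phi F ` ?A. {f \<in> ?A. Phi F f = c}) = (\<Sum>c\<in>Phi F ` ?A. card {f \<in> ?A. Phi F f = c})"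
    by (rule card_UN_disjoint) (use finA in auto)
  also have "\<dots> = (\<Sum>c\<in>Phi F ` ?A. card (autset F))"
  proof (rule sum.cong[OF refl])
    fix c assume "c \<in> Phi F ` ?A"
    then obtain f0 where f0: "f0 \<in> ?A" "c = Phi F f0" by blast
    show "card {f \<in> ?A. Phi F f = c} = card (autset F)" using fiber_card[OF sF f0(1)] f0(2) by simp
  qed
  also have "\<dots> = card (Phi F ` ?A) * card (autset F)" by simp
  also have "card (Phi F ` ?A) = tL F G" using Phi_image[OF sF, of G] tL_copies by simp
  finally show ?thesis using eq by simp
qed

lemma tdens_hset:
  assumes sF: "simple_graph F" and le: "fst F \<le> fst G"
  shows "tdens F G = real (card (hset True F (snd G) {0..<fst G}))
                   / real (card (hset True F (snd (complete_graph (fst G))) {0..<fst G}))"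
proof -
  have a: "card (autset F) > 0" by (rule autset_pos[OF sF])
  have "real (card (hset True F (snd G) {0..<fst G})) = real (tL F G) * real (card (autset F))"
    using hset_count[OF sF, of G] by simp
  moreover have "real (card (hset True F (snd (complete_graph (fst G))) {0..<fst G}))
        = real (tL F (complete_graph (fst G))) * real (card (autset F))"
    using hset_count[OF sF, of "complete_graph (fst G)"] by (simp add: complete_graph_def)
  ultimately show ?thesis unfolding tdens_def using le a by simp
qed

lemma hset_complete:
  assumes sF: "simple_graph F"
  shows "hset True F (snd (complete_graph N)) {0..<N} = {f \<in> {0..<fst F} \<rightarrow>\<^sub>E {0..<N}. inj_on f {0..<fst F}}"
proof -
  have "f ` e \<in> snd (complete_graph N)" if f: "f \<in> {0..<fst F} \<rightarrow>\<^sub>E {0..<N}" "inj_on f {0..<fst F}"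
     and e: "e \<in> snd F" for f e
  proof -
    obtain u v where uv: "u \<noteq> v" "u < fst F" "v < fst F" "e = {u, v}"
      using sF e unfolding simple_graph_def by blast
    have 1: "f u \<noteq> f v"
    proof
      assume "f u = f v"
      hence "u = v" by (rule inj_onD[OF f(2)]) (use uv in simp_all)
      thus False using uv(1) by simp
    qed
    have 2: "f u < N" "f v < N" using f(1) uv by (auto simp: PiE_iff)
    have 3: "f ` e = {f u, f v}" using uv(4) by simp
    have "{f u, f v} \<in> {{u, v} |u v. u < N \<and> v < N \<and> u \<noteq> v}" using 1 2 by blast
    thus ?thesis unfolding complete_graph_def snd_conv 3 .
  qed
  thus ?thesis unfolding hset_def by auto
qed

lemma card_hset_complete:
  assumes sF: "simple_graph F"
  shows "card (hset True F (snd (complete_graph N)) {0..<N}) = (\<Prod>l\<in>{0..<fst F}. N - l)"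
proof -
  have "card {f \<in> {0..<fst F} \<rightarrow>\<^sub>E {0..<N}. inj_on f {0..<fst F}}
        = card {0..<N} ^ (card {0..<fst F} - card {0..<fst F}) * prod ((-) (card {0..<N})) {0..<card {0..<fst F}}"
    by (rule card_inj_on_subset_funcset) auto
  thus ?thesis using hset_complete[OF sF] by simp
qed

definition Idx :: "('d \<Rightarrow> graph) \<Rightarrow> ('d \<times> nat set) set" where
  "Idx F = Sigma UNIV (\<lambda>j. Pow {0..<fst (F j)})"

lemma finite_Idx: "finite (Idx (F :: 'd::finite \<Rightarrow> graph))"
  unfolding Idx_def by (intro finite_SigmaI) auto

lemma span_full:
  fixes F :: "'d::finite \<Rightarrow> graph" and w :: "'d \<Rightarrow> real"
  assumes graphs: "\<And>i. simple_graph (F i)"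
    and distinct: "\<And>i j. i \<noteq> j \<Longrightarrow> \<not> graph_iso (F i) (F j)"
    and wpos: "\<And>i. w i > 0"
  shows "span ((\<lambda>(j,T). (\<chi> i. real (card (hset b (F i) (snd (F j)) T)) / w i)) ` Idx F) = UNIV"
proof (rule ccontr)
  let ?S = "(\<lambda>(j,T). (\<chi> i. real (card (hset b (F i) (snd (F j)) T)) / w i)) ` Idx F"
  assume "span ?S \<noteq> UNIV"
  then obtain a :: "real^'d" where a: "a \<noteq> 0" "span ?S \<subseteq> {x. a \<bullet> x = 0}"
    using span_not_univ_subset_hyperplane by blast
  define \<gamma> where "\<gamma> i = a $ i / w i" for i
  have "\<gamma> = (\<lambda>_. 0)"
  proof (rule indep[OF graphs distinct])
    fix j T assume T: "T \<subseteq> {0..<fst (F j)}"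
    hence "(j, T) \<in> Idx F" unfolding Idx_def by blast
    hence "(\<chi> i. real (card (hset b (F i) (snd (F j)) T)) / w i) \<in> span ?S"
      by (intro span_base) force
    hence "a \<bullet> (\<chi> i. real (card (hset b (F i) (snd (F j)) T)) / w i) = 0" using a(2) by blast
    hence "(\<Sum>i\<in>UNIV. a $ i * (real (card (hset b (F i) (snd (F j)) T)) / w i)) = 0"
      by (simp add: inner_vec_def)
    thus "(\<Sum>i\<in>UNIV. \<gamma> i * real (card (hset b (F i) (snd (F j)) T))) = 0"
      unfolding \<gamma>_def by simp
  qed
  hence "a $ i = 0" for i using wpos[of i] unfolding \<gamma>_def by (metis divide_eq_0_iff less_irrefl)
  hence "a = 0" by (simp add: vec_eq_iff)
  thus False using a(1) by simp
qed

lemma zero_in_S: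
  fixes F :: "'d::finite \<Rightarrow> graph"
  assumes nonempty: "\<And>i. fst (F i) \<ge> 1"
  shows "0 \<in> (\<lambda>(j,T). (\<chi> i. real (card (hset b (F i) (snd (F j)) T)) / w i)) ` Idx F"
proof -
  obtain j :: 'd where True by simp
  have "(j, {}) \<in> Idx F" unfolding Idx_def by blast
  moreover have "hset b (F i) E {} = {}" for i E
  proof -
    have "{0..<fst (F i)} \<noteq> {}" using nonempty[of i] by simp
    hence "{0..<fst (F i)} \<rightarrow>\<^sub>E ({}::nat set) = {}" by (simp add: PiE_eq_empty_iff)
    thus ?thesis unfolding hset_def by blast
  qed
  hence "(\<chi> i. real (card (hset b (F i) (snd (F j)) {})) / w i) = 0" by (simp add: vec_eq_iff)
  ultimately show ?thesis by force
qed

lemma polytope_compact: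
  "compact (subgraph_polytope F n)"
proof -
  have "{tvec F G | G. simple_graph G \<and> fst G = n} \<subseteq> tvec F ` ({n} \<times> Pow (Pow {0..<n}))"
  proof
    fix x assume "x \<in> {tvec F G | G. simple_graph G \<and> fst G = n}"
    then obtain G where G: "x = tvec F G" "simple_graph G" "fst G = n" by blast
    have "snd G \<subseteq> Pow {0..<n}" using simple_edges_sub[OF G(2)] G(3) by blast
    hence "G \<in> {n} \<times> Pow (Pow {0..<n})" using G(3) by (cases G) auto
    thus "x \<in> tvec F ` ({n} \<times> Pow (Pow {0..<n}))" using G(1) by blast
  qed
  hence "finite {tvec F G | G. simple_graph G \<and> fst G = n}"
    by (rule finite_subset) auto
  thus ?thesis unfolding subgraph_polytope_def by (intro compact_convex_hull finite_imp_compact)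
qed

lemma polytope_sub:
  assumes "\<And>x. x \<in> S \<Longrightarrow> \<exists>G. simple_graph G \<and> fst G = n \<and> x = tvec F G"
  shows "convex hull S \<subseteq> subgraph_polytope F n"
  unfolding subgraph_polytope_def using assms by (intro hull_mono) blast

definition pad :: "nat \<Rightarrow> graph \<Rightarrow> nat set \<Rightarrow> graph" where
  "pad n H T = (n, {e \<in> snd H. e \<subseteq> T})"

lemma pad_simple:
  assumes "simple_graph H" "fst H \<le> n"
  shows "simple_graph (pad n H T)"
  using assms unfolding simple_graph_def pad_def by fastforce

lemma hset_pad:
  assumes sF: "simple_graph F" and ni: "no_isolated F" and T: "T \<subseteq> {0..<n}"
  shows "hset b F {e \<in> E. e \<subseteq> T} {0..<n} = hset b F E T"
proof
  show "hset b F {e \<in> E. e \<subseteq> T} {0..<n} \<subseteq> hset b F E T"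
  proof
    fix f assume f: "f \<in> hset b F {e \<in> E. e \<subseteq> T} {0..<n}"
    have fe: "\<And>e. e \<in> snd F \<Longrightarrow> f ` e \<in> E \<and> f ` e \<subseteq> T" using f unfolding hset_def by auto
    have "f u \<in> T" if u: "u \<in> {0..<fst F}" for u
    proof -
      obtain e where e: "e \<in> snd F" "u \<in> e" using ni u unfolding no_isolated_def by auto
      thus ?thesis using fe[OF e(1)] by blast
    qed
    hence "f \<in> {0..<fst F} \<rightarrow>\<^sub>E T" using f unfolding hset_def by (auto simp: PiE_iff)
    thus "f \<in> hset b F E T" using f fe unfolding hset_def by auto
  qed
next
  show "hset b F E T \<subseteq> hset b F {e \<in> E. e \<subseteq> T} {0..<n}"
  proof
    fix f assume f: "f \<in> hset b F E T"
    have fT: "f \<in> {0..<fst F} \<rightarrow>\<^sub>E T" using f unfolding hset_def by blast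
    hence "f \<in> {0..<fst F} \<rightarrow>\<^sub>E {0..<n}" using T by (auto simp: PiE_iff)
    moreover have "f ` e \<subseteq> T" if "e \<in> snd F" for e
      using simple_edges_sub[OF sF that] fT by (auto simp: PiE_iff)
    ultimately show "f \<in> hset b F {e \<in> E. e \<subseteq> T} {0..<n}" using f unfolding hset_def by auto
  qed
qed

lemma small_pos:
  fixes F :: "'d::finite \<Rightarrow> graph" and n0 :: nat
  assumes graphs: "\<And>i. simple_graph (F i)"
    and nonempty: "\<And>i. fst (F i) \<ge> 1"
    and noiso: "\<And>i. no_isolated (F i)"
    and distinct: "\<And>i j. i \<noteq> j \<Longrightarrow> \<not> graph_iso (F i) (F j)"
    and n0: "\<And>i. fst (F i) \<le> n0" and n: "n0 \<le> n"
  shows "measure lborel (subgraph_polytope F n) > 0"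
proof -
  define w where "w i = real (card (hset True (F i) (snd (complete_graph n)) {0..<n}))" for i
  have wpos: "w i > 0" for i
  proof -
    have "(\<Prod>l\<in>{0..<fst (F i)}. n - l) > 0" using n0[of i] n by (intro prod_pos) auto
    hence "real (\<Prod>l\<in>{0..<fst (F i)}. n - l) > 0" by (simp only: of_nat_0_less_iff)
    thus ?thesis unfolding w_def by (simp only: card_hset_complete[OF graphs[of i], of n])
  qed
  let ?S = "(\<lambda>(j,T). (\<chi> i. real (card (hset True (F i) (snd (F j)) T)) / w i)) ` Idx F"
  have "interior (convex hull ?S) \<noteq> {}"
    by (rule geo_interior[OF zero_in_S[OF nonempty] span_full[OF graphs distinct wpos]])
  moreover have "convex hull ?S \<subseteq> subgraph_polytope F n"
  proof (rule polytope_sub)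
    fix x assume "x \<in> ?S"
    then obtain j T where jT: "(j,T) \<in> Idx F" and x: "x = (\<chi> i. real (card (hset True (F i) (snd (F j)) T)) / w i)"
      by auto
    have T: "T \<subseteq> {0..<fst (F j)}" using jT unfolding Idx_def by blast
    have kj: "fst (F j) \<le> n" using n0[of j] n by simp
    have "x = tvec F (pad n (F j) T)"
    proof -
      have "tdens (F i) (pad n (F j) T) = real (card (hset True (F i) (snd (F j)) T)) / w i" for i
      proof -
        have "fst (F i) \<le> fst (pad n (F j) T)" using n0[of i] n by (simp add: pad_def)
        hence "tdens (F i) (pad n (F j) T) = real (card (hset True (F i) {e \<in> snd (F j). e \<subseteq> T} {0..<n})) / w i"
          using tdens_hset[OF graphs[of i]] unfolding w_def by (simp add: pad_def)
        also have "hset True (F i) {e \<in> snd (F j). e \<subseteq> T} {0..<n} = hset True (F i) (snd (F j)) T"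
          by (rule hset_pad[OF graphs noiso]) (use T kj in auto)
        finally show ?thesis .
      qed
      thus ?thesis unfolding x tvec_def by (simp add: vec_eq_iff)
    qed
    moreover have "simple_graph (pad n (F j) T)" by (rule pad_simple[OF graphs kj])
    moreover have "fst (pad n (F j) T) = n" by (simp add: pad_def)
    ultimately show "\<exists>G. simple_graph G \<and> fst G = n \<and> x = tvec F G" by blast
  qed
  ultimately show ?thesis by (rule geo_measure_pos[OF _ _ polytope_compact])
qed

definition blow :: "nat \<Rightarrow> nat \<Rightarrow> graph \<Rightarrow> nat set \<Rightarrow> graph" where
  "blow n m H T = (n, { {v * m + a, w * m + c} | v w a c. {v,w} \<in> snd H \<and> v \<in> T \<and> w \<in> T \<and> a < m \<and> c < m})"

lemma blow_simple:
  assumes sH: "simple_graph H" and T: "T \<subseteq> {0..<fst H}" and le: "fst H * m \<le> n"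
  shows "simple_graph (blow n m H T)"
  unfolding simple_graph_def
proof
  fix e assume "e \<in> snd (blow n m H T)"
  then obtain v w a c where e: "e = {v * m + a, w * m + c}" and vw: "{v,w} \<in> snd H" "v \<in> T" "w \<in> T" "a < m" "c < m"
    unfolding blow_def by auto
  obtain x y where xy: "x \<noteq> y" "{v,w} = {x,y}" using sH vw(1) unfolding simple_graph_def by blast
  have vne: "v \<noteq> w" using xy by (metis doubleton_eq_iff)
  have lt: "z * m + b < n" if "z \<in> T" "b < m" for z b
  proof -
    have "z < fst H" using that T by auto
    hence "z + 1 \<le> fst H" by simp
    hence "(z + 1) * m \<le> fst H * m" by (rule mult_right_mono) simp
    thus ?thesis using that le by (simp add: algebra_simps)
  qed
  have "v * m + a \<noteq> w * m + c"
  proof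
    assume "v * m + a = w * m + c"
    hence "(v * m + a) div m = (w * m + c) div m" by simp
    hence "v = w" using vw by simp
    thus False using vne by simp
  qed
  thus "\<exists>u v. u \<noteq> v \<and> u < fst (blow n m H T) \<and> v < fst (blow n m H T) \<and> e = {u, v}"
    using e lt vw by (auto simp: blow_def)
qed

lemma blow_lower:
  assumes T: "T \<subseteq> {0..<fst H}" and le: "fst H * m \<le> n" and sF: "simple_graph F"
  shows "card (hset False F (snd H) T) * card {a \<in> {0..<fst F} \<rightarrow>\<^sub>E {0..<m}. inj_on a {0..<fst F}}
         \<le> card (hset True F (snd (blow n m H T)) {0..<n})"
proof -
  let ?K = "{0..<fst F}"
  let ?A = "hset False F (snd H) T"
  let ?B = "{a \<in> ?K \<rightarrow>\<^sub>E {0..<m}. inj_on a ?K}"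
  define L where "L p = restrict (\<lambda>u. fst p u * m + snd p u) ?K" for p :: "(nat \<Rightarrow> nat) \<times> (nat \<Rightarrow> nat)"
  have lt: "z * m + b < n" if "z \<in> T" "b < m" for z b
  proof -
    have "z < fst H" using that T by auto
    hence "z + 1 \<le> fst H" by simp
    hence "(z + 1) * m \<le> fst H * m" by (rule mult_right_mono) simp
    thus ?thesis using that le by (simp add: algebra_simps)
  qed
  have inj: "inj_on L (?A \<times> ?B)"
  proof (rule inj_onI)
    fix p q assume p: "p \<in> ?A \<times> ?B" and q: "q \<in> ?A \<times> ?B" and eq: "L p = L q"
    have pv: "fst p u < m \<Longrightarrow> True" for u by simp
    have val: "fst p u * m + snd p u = fst q u * m + snd q u" if "u \<in> ?K" for u
      using fun_cong[OF eq, of u] that unfolding L_def by simp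
    have sm: "snd p u < m" "snd q u < m" if "u \<in> ?K" for u
      using p q that by (auto simp: PiE_iff)
    have 1: "fst p u = fst q u" if "u \<in> ?K" for u
    proof -
      have "(fst p u * m + snd p u) div m = (fst q u * m + snd q u) div m" using val[OF that] by simp
      thus ?thesis using sm[OF that] by simp
    qed
    have 2: "snd p u = snd q u" if "u \<in> ?K" for u
    proof -
      have "(fst p u * m + snd p u) mod m = (fst q u * m + snd q u) mod m" using val[OF that] by simp
      thus ?thesis using sm[OF that] by simp
    qed
    have "fst p = fst q"
      by (rule extensionalityI[of _ ?K]) (use p q 1 in \<open>auto simp: hset_def PiE_iff\<close>)
    moreover have "snd p = snd q"
      by (rule extensionalityI[of _ ?K]) (use p q 2 in \<open>auto simp: PiE_iff\<close>)
    ultimately show "p = q" by (simp add: prod_eq_iff)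
  qed
  have into: "L ` (?A \<times> ?B) \<subseteq> hset True F (snd (blow n m H T)) {0..<n}"
  proof
    fix f assume "f \<in> L ` (?A \<times> ?B)"
    then obtain \<psi> a where pa: "\<psi> \<in> ?A" "a \<in> ?B" and f: "f = L (\<psi>, a)" by blast
    have \<psi>T: "\<psi> u \<in> T" if "u \<in> ?K" for u using pa(1) that unfolding hset_def by (auto simp: PiE_iff)
    have am: "a u < m" if "u \<in> ?K" for u using pa(2) that by (auto simp: PiE_iff)
    have ai: "inj_on a ?K" using pa(2) by blast
    have fv: "f u = \<psi> u * m + a u" if "u \<in> ?K" for u using that unfolding f L_def by simp
    have 1: "f \<in> ?K \<rightarrow>\<^sub>E {0..<n}" using fv \<psi>T am lt unfolding f L_def by (auto simp: PiE_iff)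
    have 2: "inj_on f ?K"
    proof (rule inj_onI)
      fix u u' assume u: "u \<in> ?K" "u' \<in> ?K" "f u = f u'"
      hence "(\<psi> u * m + a u) mod m = (\<psi> u' * m + a u') mod m" using fv by simp
      hence "a u = a u'" using am u by simp
      thus "u = u'" using ai u unfolding inj_on_def by blast
    qed
    have 3: "f ` e \<in> snd (blow n m H T)" if e: "e \<in> snd F" for e
    proof -
      obtain x y where xy: "x \<noteq> y" "x < fst F" "y < fst F" "e = {x, y}"
        using sF e unfolding simple_graph_def by blast
      have "\<psi> ` e \<in> snd H" using pa(1) e unfolding hset_def by blast
      hence "{\<psi> x, \<psi> y} \<in> snd H" using xy by simp
      moreover have "f ` e = {\<psi> x * m + a x, \<psi> y * m + a y}" using xy fv by simp
      moreover have "\<psi> x \<in> T" "\<psi> y \<in> T" "a x < m" "a y < m" using xy \<psi>T am by auto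
      ultimately show ?thesis unfolding blow_def by auto
    qed
    show "f \<in> hset True F (snd (blow n m H T)) {0..<n}" unfolding hset_def using 1 2 3 by blast
  qed
  have "card (?A \<times> ?B) = card (L ` (?A \<times> ?B))" using card_image[OF inj] by simp
  also have "\<dots> \<le> card (hset True F (snd (blow n m H T)) {0..<n})"
    by (rule card_mono[OF finite_hset into]) simp
  finally show ?thesis by (simp add: card_cartesian_product)
qed

lemma blow_upper:
  assumes T: "T \<subseteq> {0..<fst H}" and m: "m > 0" and sF: "simple_graph F" and ni: "no_isolated F"
  shows "card (hset True F (snd (blow n m H T)) {0..<n}) \<le> card (hset False F (snd H) T) * m ^ fst F"
proof -
  let ?K = "{0..<fst F}"
  let ?A = "hset False F (snd H) T"
  let ?B = "?K \<rightarrow>\<^sub>E {0..<m}"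
  define L where "L p = restrict (\<lambda>u. fst p u * m + snd p u) ?K" for p :: "(nat \<Rightarrow> nat) \<times> (nat \<Rightarrow> nat)"
  have sub: "hset True F (snd (blow n m H T)) {0..<n} \<subseteq> L ` (?A \<times> ?B)"
  proof
    fix f assume f: "f \<in> hset True F (snd (blow n m H T)) {0..<n}"
    have fext: "f \<in> extensional ?K" using f unfolding hset_def by (auto simp: PiE_iff)
    have fe: "\<And>e. e \<in> snd F \<Longrightarrow> f ` e \<in> snd (blow n m H T)" using f unfolding hset_def by blast
    define \<psi> where "\<psi> = restrict (\<lambda>u. f u div m) ?K"
    define a where "a = restrict (\<lambda>u. f u mod m) ?K"
    have \<psi>e: "\<psi> ` e = (\<lambda>z. z div m) ` (f ` e)" if "e \<in> snd F" for e
      using simple_edges_sub[OF sF that] unfolding \<psi>_def by auto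
    have key: "\<psi> ` e \<in> snd H \<and> \<psi> ` e \<subseteq> T" if e: "e \<in> snd F" for e
    proof -
      obtain v w a' c where ev: "f ` e = {v * m + a', w * m + c}" and vw: "{v,w} \<in> snd H" "v \<in> T" "w \<in> T" "a' < m" "c < m"
        using fe[OF e] unfolding blow_def by auto
      have "\<psi> ` e = (\<lambda>z. z div m) ` {v * m + a', w * m + c}" using \<psi>e[OF e] ev by simp
      also have "\<dots> = {v, w}" using vw m by simp
      finally show ?thesis using vw by simp
    qed
    have \<psi>T: "\<psi> u \<in> T" if u: "u \<in> ?K" for u
    proof -
      obtain e where e: "e \<in> snd F" "u \<in> e" using ni u unfolding no_isolated_def by auto
      thus ?thesis using key[OF e(1)] by blast
    qed
    have 1: "\<psi> \<in> ?A" unfolding hset_def using \<psi>T key by (auto simp: \<psi>_def)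
    have 2: "a \<in> ?B" using m unfolding a_def by auto
    have "L (\<psi>, a) = f"
    proof (rule extensionalityI[OF _ fext])
      show "L (\<psi>, a) \<in> extensional ?K" unfolding L_def by simp
      fix u assume "u \<in> ?K" thus "L (\<psi>, a) u = f u" unfolding L_def \<psi>_def a_def by simp
    qed
    thus "f \<in> L ` (?A \<times> ?B)" using 1 2 by blast
  qed
  have finAB: "finite (?A \<times> ?B)"
  proof -
    have "finite ?A" by (rule finite_hset) (use T finite_subset in blast)
    moreover have "finite ?B" by (intro finite_PiE) auto
    ultimately show ?thesis by simp
  qed
  have "card (hset True F (snd (blow n m H T)) {0..<n}) \<le> card (L ` (?A \<times> ?B))"
    by (rule card_mono[OF finite_imageI[OF finAB] sub])
  also have "\<dots> \<le> card (?A \<times> ?B)" by (rule card_image_le[OF finAB])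
  also have "\<dots> = card ?A * m ^ fst F" by (simp add: card_cartesian_product card_PiE)
  finally show ?thesis .
qed

lemma q_lim:
  assumes s: "s > 0"
  shows "(\<lambda>n::nat. real (n div s) / real n) \<longlonglongrightarrow> 1 / real s"
proof (rule tendsto_sandwich)
  have b: "real n / real s - 1 \<le> real (n div s) \<and> real (n div s) \<le> real n / real s" for n
  proof -
    have "real (n div s) = of_int \<lfloor>real n / real s\<rfloor>" using floor_divide_of_nat_eq[of n s, where 'a=real] by simp
    thus ?thesis by linarith
  qed
  show "eventually (\<lambda>n. 1 / real s - 1 / real n \<le> real (n div s) / real n) sequentially"
  proof (rule eventually_sequentiallyI[of 1])
    fix n :: nat assume "1 \<le> n"
    hence np: "real n > 0" by simp
    have "(real n / real s - 1) / real n \<le> real (n div s) / real n"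
      using b[of n] np by (intro divide_right_mono) auto
    moreover have "(real n / real s - 1) / real n = 1 / real s - 1 / real n"
      using np by (simp add: field_simps)
    ultimately show "1 / real s - 1 / real n \<le> real (n div s) / real n" by simp
  qed
  show "eventually (\<lambda>n. real (n div s) / real n \<le> 1 / real s) sequentially"
  proof (rule eventually_sequentiallyI[of 1])
    fix n :: nat assume "1 \<le> n"
    hence np: "real n > 0" by simp
    have "real (n div s) / real n \<le> (real n / real s) / real n"
      using b[of n] np by (intro divide_right_mono) auto
    also have "(real n / real s) / real n = 1 / real s" using np by simp
    finally show "real (n div s) / real n \<le> 1 / real s" .
  qed
  show "(\<lambda>n. 1 / real s - 1 / real n) \<longlonglongrightarrow> 1 / real s"
    using tendsto_diff[OF tendsto_const lim_1_over_n, of "1 / real s"] by simp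
  show "(\<lambda>n. 1 / real s) \<longlonglongrightarrow> 1 / real s" by simp
qed

lemma factor_lim:
  assumes s: "s > 0"
  shows "(\<lambda>n::nat. real (n div s - l1) / real (n - l)) \<longlonglongrightarrow> 1 / real s"
proof -
  have lim: "(\<lambda>n::nat. (real (n div s) / real n - real l1 * (1 / real n)) / (1 - real l * (1 / real n)))
        \<longlonglongrightarrow> (1 / real s - real l1 * 0) / (1 - real l * 0)"
    by (intro tendsto_intros q_lim[OF s] lim_1_over_n) simp
  have "(\<lambda>n::nat. real (n div s - l1) / real (n - l)) \<longlonglongrightarrow> (1 / real s - real l1 * 0) / (1 - real l * 0)"
  proof (rule Lim_transform_eventually[OF lim])
    show "eventually (\<lambda>n. (real (n div s) / real n - real l1 * (1 / real n)) / (1 - real l * (1 / real n))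
            = real (n div s - l1) / real (n - l)) sequentially"
    proof (rule eventually_sequentiallyI[of "(l1 + l + 1) * s"])
      fix n assume n: "(l1 + l + 1) * s \<le> n"
      have "(l1 + l + 1) * s div s \<le> n div s" by (rule div_le_mono[OF n])
      hence "l1 + l + 1 \<le> n div s" using s by simp
      hence ld: "l1 \<le> n div s" by simp
      have "(l1 + l + 1) * 1 \<le> (l1 + l + 1) * s" using s by (intro mult_le_mono2) simp
      hence ln: "l < n" using n by simp
      have np: "real n > 0" using ln by simp
      have "real (n div s - l1) = real (n div s) - real l1" using ld by simp
      moreover have "real (n - l) = real n - real l" using ln by simp
      moreover have "real n - real l > 0" using ln by simp
      ultimately show "(real (n div s) / real n - real l1 * (1 / real n)) / (1 - real l * (1 / real n))
            = real (n div s - l1) / real (n - l)" using np by (simp add: field_simps)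
    qed
  qed
  thus ?thesis by simp
qed

lemma ff_lim1:
  assumes s: "s > 0"
  shows "(\<lambda>n::nat. real (\<Prod>l\<in>{0..<k}. n div s - l) / real (\<Prod>l\<in>{0..<k}. n - l)) \<longlonglongrightarrow> (1 / real s) ^ k"
proof -
  have "(\<lambda>n::nat. \<Prod>l\<in>{0..<k}. real (n div s - l) / real (n - l)) \<longlonglongrightarrow> (\<Prod>l\<in>{0..<k}. 1 / real s)"
    by (intro tendsto_prod factor_lim[OF s])
  thus ?thesis by (simp add: prod_dividef)
qed

lemma ff_lim2:
  assumes s: "s > 0"
  shows "(\<lambda>n::nat. real ((n div s) ^ k) / real (\<Prod>l\<in>{0..<k}. n - l)) \<longlonglongrightarrow> (1 / real s) ^ k"
proof -
  have "(\<lambda>n::nat. \<Prod>l\<in>{0..<k}. real (n div s - 0) / real (n - l)) \<longlonglongrightarrow> (\<Prod>l\<in>{0..<k}. 1 / real s)"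
    by (intro tendsto_prod factor_lim[OF s])
  thus ?thesis by (simp add: prod_dividef)
qed

lemma blow_tdens_lim:
  fixes F :: "'d::finite \<Rightarrow> graph" and n0 :: nat
  assumes graphs: "\<And>i. simple_graph (F i)"
    and noiso: "\<And>i. no_isolated (F i)"
    and n0: "\<And>i. fst (F i) \<le> n0" and s: "n0 > 0"
    and T: "T \<subseteq> {0..<fst (F j)}"
  shows "(\<lambda>n. tdens (F i) (blow n (n div n0) (F j) T))
          \<longlonglongrightarrow> real (card (hset False (F i) (snd (F j)) T)) / real n0 ^ fst (F i)"
proof -
  let ?k = "fst (F i)"
  let ?h = "real (card (hset False (F i) (snd (F j)) T))"
  define D where "D n = real (\<Prod>l\<in>{0..<?k}. n - l)" for n :: nat
  have lo: "(\<lambda>n. ?h * (real (\<Prod>l\<in>{0..<?k}. n div n0 - l) / D n)) \<longlonglongrightarrow> ?h * (1 / real n0) ^ ?k"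
    unfolding D_def by (intro tendsto_mult tendsto_const ff_lim1 s)
  have up: "(\<lambda>n. ?h * (real ((n div n0) ^ ?k) / D n)) \<longlonglongrightarrow> ?h * (1 / real n0) ^ ?k"
    unfolding D_def by (intro tendsto_mult tendsto_const ff_lim2 s)
  have ev: "eventually (\<lambda>n. ?h * (real (\<Prod>l\<in>{0..<?k}. n div n0 - l) / D n) \<le> tdens (F i) (blow n (n div n0) (F j) T)
           \<and> tdens (F i) (blow n (n div n0) (F j) T) \<le> ?h * (real ((n div n0) ^ ?k) / D n)) sequentially"
  proof (rule eventually_sequentiallyI[of n0])
    fix n assume n: "n0 \<le> n"
    define m where "m = n div n0"
    have mpos: "m > 0" using n s unfolding m_def by (simp add: div_greater_zero_iff)
    have le: "fst (F j) * m \<le> n"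
    proof -
      have "fst (F j) * m \<le> n0 * m" using n0[of j] by (rule mult_right_mono) simp
      also have "n0 * m \<le> n" unfolding m_def by (simp add: mult.commute)
      finally show ?thesis .
    qed
    have kn: "?k \<le> n" using n0[of i] n by simp
    have Dpos: "D n > 0" unfolding D_def using kn by (intro of_nat_0_less_iff[THEN iffD2] prod_pos) auto
    have td: "tdens (F i) (blow n m (F j) T) = real (card (hset True (F i) (snd (blow n m (F j) T)) {0..<n})) / D n"
      using tdens_hset[OF graphs[of i], of "blow n m (F j) T"] kn card_hset_complete[OF graphs[of i], of n]
      unfolding D_def by (simp add: blow_def)
    have cinj: "card {a \<in> {0..<?k} \<rightarrow>\<^sub>E {0..<m}. inj_on a {0..<?k}} = (\<Prod>l\<in>{0..<?k}. m - l)"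
    proof -
      have "card {a \<in> {0..<?k} \<rightarrow>\<^sub>E {0..<m}. inj_on a {0..<?k}}
        = card {0..<m} ^ (card {0..<?k} - card {0..<?k}) * prod ((-) (card {0..<m})) {0..<card {0..<?k}}"
        by (rule card_inj_on_subset_funcset) auto
      thus ?thesis by simp
    qed
    have L: "card (hset False (F i) (snd (F j)) T) * (\<Prod>l\<in>{0..<?k}. m - l)
          \<le> card (hset True (F i) (snd (blow n m (F j) T)) {0..<n})"
      using blow_lower[OF T le graphs[of i]] cinj by simp
    have U: "card (hset True (F i) (snd (blow n m (F j) T)) {0..<n}) \<le> card (hset False (F i) (snd (F j)) T) * m ^ ?k"
      by (rule blow_upper[OF T mpos graphs noiso])
    have "?h * (real (\<Prod>l\<in>{0..<?k}. m - l) / D n) = real (card (hset False (F i) (snd (F j)) T) * (\<Prod>l\<in>{0..<?k}. m - l)) / D n"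
      by simp
    also have "\<dots> \<le> tdens (F i) (blow n m (F j) T)"
      unfolding td using divide_right_mono[OF L[THEN of_nat_mono[where 'a=real]] less_imp_le[OF Dpos]] .
    finally have 1: "?h * (real (\<Prod>l\<in>{0..<?k}. m - l) / D n) \<le> tdens (F i) (blow n m (F j) T)" .
    have "tdens (F i) (blow n m (F j) T) \<le> real (card (hset False (F i) (snd (F j)) T) * m ^ ?k) / D n"
      unfolding td using divide_right_mono[OF U[THEN of_nat_mono[where 'a=real]] less_imp_le[OF Dpos]] .
    also have "\<dots> = ?h * (real (m ^ ?k) / D n)" by simp
    finally have 2: "tdens (F i) (blow n m (F j) T) \<le> ?h * (real (m ^ ?k) / D n)" .
    show "?h * (real (\<Prod>l\<in>{0..<?k}. n div n0 - l) / D n) \<le> tdens (F i) (blow n (n div n0) (F j) T)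
           \<and> tdens (F i) (blow n (n div n0) (F j) T) \<le> ?h * (real ((n div n0) ^ ?k) / D n)"
      using 1 2 unfolding m_def by simp
  qed
  have "(\<lambda>n. tdens (F i) (blow n (n div n0) (F j) T)) \<longlonglongrightarrow> ?h * (1 / real n0) ^ ?k"
    by (rule tendsto_sandwich[OF eventually_conj_iff[THEN iffD1, OF ev, THEN conjunct1]
              eventually_conj_iff[THEN iffD1, OF ev, THEN conjunct2] lo up])
  thus ?thesis by (simp add: power_one_over)
qed

lemma large_ball:
  fixes F :: "'d::finite \<Rightarrow> graph" and n0 :: nat
  assumes graphs: "\<And>i. simple_graph (F i)"
    and nonempty: "\<And>i. fst (F i) \<ge> 1"
    and noiso: "\<And>i. no_isolated (F i)"
    and distinct: "\<And>i j. i \<noteq> j \<Longrightarrow> \<not> graph_iso (F i) (F j)"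
    and n0: "\<And>i. fst (F i) \<le> n0"
  shows "\<exists>N z r. r > 0 \<and> (\<forall>n\<ge>N. ball z r \<subseteq> subgraph_polytope F n)"
proof -
  obtain i1 :: 'd where True by simp
  have s: "n0 > 0" using nonempty[of i1] n0[of i1] by simp
  define w where "w i = real n0 ^ fst (F i)" for i
  have wpos: "w i > 0" for i unfolding w_def using s by simp
  define c where "c = (\<lambda>(j,T). (\<chi> i. real (card (hset False (F i) (snd (F j)) T)) / w i))"
  define v where "v n = (\<lambda>(j,T). tvec F (blow n (n div n0) (F j) T))" for n
  have "interior (convex hull (c ` Idx F)) \<noteq> {}"
    unfolding c_def by (rule geo_interior[OF zero_in_S[OF nonempty] span_full[OF graphs distinct wpos]])
  then obtain z where z: "z \<in> interior (convex hull (c ` Idx F))" by blast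
  have "open (interior (convex hull (c ` Idx F)))" by simp
  then obtain e where e: "e > 0" "ball z e \<subseteq> interior (convex hull (c ` Idx F))"
    using z open_contains_ball by blast
  define r where "r = e / 2"
  have r: "r > 0" using e(1) r_def by simp
  have B: "ball z (2 * r) \<subseteq> convex hull (c ` Idx F)" using e(2) interior_subset r_def by fastforce
  have lim: "(\<lambda>n. v n p) \<longlonglongrightarrow> c p" if p: "p \<in> Idx F" for p
  proof -
    obtain j T where jT: "p = (j, T)" by (cases p)
    have T: "T \<subseteq> {0..<fst (F j)}" using p jT unfolding Idx_def by blast
    have "(\<lambda>n. \<chi> i. tdens (F i) (blow n (n div n0) (F j) T)) \<longlonglongrightarrow>
           (\<chi> i. real (card (hset False (F i) (snd (F j)) T)) / w i)"
      unfolding w_def by (intro tendsto_vec_lambda blow_tdens_lim[of F, OF graphs noiso n0 s T])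
    thus ?thesis unfolding v_def c_def jT tvec_def by simp
  qed
  have "eventually (\<lambda>n. \<forall>p\<in>Idx F. dist (v n p) (c p) < r) sequentially"
    using finite_Idx lim r by (intro eventually_ball_finite) (auto intro: tendstoD)
  then obtain N where N: "\<And>n. N \<le> n \<Longrightarrow> \<forall>p\<in>Idx F. dist (v n p) (c p) < r"
    unfolding eventually_sequentially by blast
  have "ball z r \<subseteq> subgraph_polytope F n" if n: "max N n0 \<le> n" for n
  proof -
    have "ball z r \<subseteq> convex hull (v n ` Idx F)"
      by (rule geo_perturb[OF finite_Idx r B]) (use N n in auto)
    also have "convex hull (v n ` Idx F) \<subseteq> subgraph_polytope F n"
    proof (rule polytope_sub)
      fix x assume "x \<in> v n ` Idx F"
      then obtain j T where jT: "(j,T) \<in> Idx F" and x: "x = tvec F (blow n (n div n0) (F j) T)"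
        unfolding v_def by auto
      have T: "T \<subseteq> {0..<fst (F j)}" using jT unfolding Idx_def by blast
      have le: "fst (F j) * (n div n0) \<le> n"
      proof -
        have "fst (F j) * (n div n0) \<le> n0 * (n div n0)" using n0[of j] by (rule mult_right_mono) simp
        also have "n0 * (n div n0) \<le> n" by (simp add: mult.commute)
        finally show ?thesis .
      qed
      have "simple_graph (blow n (n div n0) (F j) T)" by (rule blow_simple[OF graphs T le])
      moreover have "fst (blow n (n div n0) (F j) T) = n" by (simp add: blow_def)
      ultimately show "\<exists>G. simple_graph G \<and> fst G = n \<and> x = tvec F G" using x by blast
    qed
    finally show ?thesis .
  qed
  thus ?thesis using r by blast
qed

theorem corollary4p7:
  fixes F :: "'d::finite \<Rightarrow> graph" and n0 :: nat
  assumes graphs: "\<And>i. simple_graph (F i)"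
    and nonempty: "\<And>i. fst (F i) \<ge> 1"
    and noiso: "\<And>i. no_isolated (F i)"
    and distinct: "\<And>i j. i \<noteq> j \<Longrightarrow> \<not> graph_iso (F i) (F j)"
    and n0: "\<And>i. fst (F i) \<le> n0"
  shows "\<exists>V > 0. \<forall>n \<ge> n0. measure lborel (subgraph_polytope F n) > V"
proof -
  obtain N z r where r: "r > 0" and N: "\<And>n. N \<le> n \<Longrightarrow> ball z r \<subseteq> subgraph_polytope F n"
    using large_ball[of F n0, OF graphs nonempty noiso distinct n0] by blast
  define \<mu> where "\<mu> = measure lborel (ball z r)"
  have \<mu>pos: "\<mu> > 0" unfolding \<mu>_def using content_ball_pos[OF r] by simp
  define M where "M = Min (insert \<mu> ((\<lambda>n. measure lborel (subgraph_polytope F n)) ` {n0..<N}))"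
  have finM: "finite (insert \<mu> ((\<lambda>n. measure lborel (subgraph_polytope F n)) ` {n0..<N}))" by simp
  have Mpos: "M > 0" unfolding M_def
  proof (subst Min_gr_iff[OF finM])
    show "insert \<mu> ((\<lambda>n. measure lborel (subgraph_polytope F n)) ` {n0..<N}) \<noteq> {}" by simp
    show "\<forall>a\<in>insert \<mu> ((\<lambda>n. measure lborel (subgraph_polytope F n)) ` {n0..<N}). 0 < a"
      using \<mu>pos small_pos[of F n0, OF graphs nonempty noiso distinct n0] by auto
  qed
  have Mle: "M \<le> x" if "x \<in> insert \<mu> ((\<lambda>n. measure lborel (subgraph_polytope F n)) ` {n0..<N})" for x
    unfolding M_def using finM that by simp
  have "measure lborel (subgraph_polytope F n) > M / 2" if n: "n0 \<le> n" for n
  proof (cases "n < N")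
    case True
    hence "M \<le> measure lborel (subgraph_polytope F n)" using n by (intro Mle) auto
    thus ?thesis using Mpos by linarith
  next
    case False
    have "\<mu> \<le> measure lborel (subgraph_polytope F n)" unfolding \<mu>_def
    proof (rule measure_mono_fmeasurable)
      show "ball z r \<subseteq> subgraph_polytope F n" using N False by simp
      show "ball z r \<in> sets lborel" by simp
      show "subgraph_polytope F n \<in> fmeasurable lborel" by (rule fmeasurable_compact[OF polytope_compact])
    qed
    moreover have "M \<le> \<mu>" by (rule Mle) simp
    ultimately show ?thesis using Mpos by linarith
  qed
  moreover have "M / 2 > 0" using Mpos by simp
  ultimately show ?thesis by blast
qed

end
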